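(* Let $G$ be a group, $E$ a real Banach space, and $f\colon G\to E$ such that $\|f(xy)+f(xy^{-1})-2f(x)\|\le c$ for all $x,y\in G$, where $c>0$. Define $c_1=c+2\|f(1)\|$, $c_2=c+\|f(1)\|$, $c_3=c+c_1$, and $c_m=c+c_1+c_{m-2}$ for $m>3$. Then for every integer $m>1$, every $k\in\mathbb{N}$ and every $x\in G$, $\|f(x^{m^k})-m^kf(x)\|\le c_m(1+m+\cdots+m^{k-1})$ and $\left\|\frac{1}{m^k}f(x^{m^k})-f(x)\right\|\le c_m$. *)

theory Defs
  imports "HOL-Analysis.Analysis" "HOL-Algebra.Group"
begin

text \<open>The constants c_m of the paper, as a function of c and a = norm (f 1):
  c_1 = c + 2a, c_2 = c + a, c_3 = c + c_1, c_m = c + c_1 + c_(m-2) for m > 3.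
  The value at m = 0 is irrelevant (set to 0).\<close>
fun cconst :: "real \<Rightarrow> real \<Rightarrow> nat \<Rightarrow> real" where
  "cconst c a 0 = 0"
| "cconst c a (Suc 0) = c + 2 * a"
| "cconst c a (Suc (Suc 0)) = c + a"
| "cconst c a (Suc (Suc (Suc 0))) = c + (c + 2 * a)"
| "cconst c a (Suc (Suc (Suc (Suc n)))) = c + (c + 2 * a) + cconst c a (Suc (Suc n))"

end

theory Submission
  imports Defs
begin

lemma base_step:
  fixes G (structure) and f :: "'g \<Rightarrow> 'e::banach" and c :: real
  assumes grp: "group G"
    and H: "\<And>x y. x \<in> carrier G \<Longrightarrow> y \<in> carrier G \<Longrightarrow>
           norm (f (x \<otimes> y) + f (x \<otimes> inv y) - 2 *\<^sub>R f x) \<le> c"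
    and c0: "c > 0"
    and x: "x \<in> carrier G"
  shows "n \<ge> 1 \<Longrightarrow> norm (f (x [^] n) - real n *\<^sub>R f x) \<le> cconst c (norm (f \<one>)) n"
proof (induction n rule: less_induct)
  case (less n)
  interpret group G by (rule grp)
  have E2: "norm (f y + f (inv y)) \<le> c + 2 * norm (f \<one>)" if y: "y \<in> carrier G" for y
  proof -
    have "norm (f y + f (inv y) - 2 *\<^sub>R f \<one>) \<le> c" using H[of \<one> y] y by simp
    moreover have "norm (f y + f (inv y)) \<le> norm (f y + f (inv y) - 2 *\<^sub>R f \<one>) + norm (2 *\<^sub>R f \<one>)"
      by (metis diff_add_cancel norm_triangle_ineq)
    ultimately show ?thesis by simp
  qed
  show ?case
  proof (cases n)
    case 0 then show ?thesis using less by simp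
  next
    case (Suc n1)
    show ?thesis
    proof (cases n1)
      case 0 then show ?thesis using Suc c0 x by simp
    next
      case (Suc n2)
      show ?thesis
      proof (cases n2)
        case 0
        have "norm (f (x \<otimes> x) + f (x \<otimes> inv x) - 2 *\<^sub>R f x) \<le> c" using H[of x x] x by simp
        hence h: "norm (f (x [^] (2::nat)) - 2 *\<^sub>R f x + f \<one>) \<le> c" using x
          by (simp add: numeral_2_eq_2 nat_pow_Suc2 algebra_simps)
        have "norm (f (x [^] (2::nat)) - 2 *\<^sub>R f x) \<le> norm (f (x [^] (2::nat)) - 2 *\<^sub>R f x + f \<one>) + norm (f \<one>)"
          by (metis add_diff_cancel norm_triangle_ineq4)
        then show ?thesis using h \<open>n = Suc n1\<close> Suc 0 by (simp add: numeral_2_eq_2)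
      next
        case (Suc p)
        have n: "n = Suc (Suc (Suc p))" using \<open>n = Suc n1\<close> \<open>n1 = Suc n2\<close> Suc by simp
        define q where "q = Suc p"
        have xq: "x [^] q \<in> carrier G" using x by simp
        have e1: "x [^] n = x \<otimes> x [^] (Suc q)" using x n q_def nat_pow_Suc2[of x "Suc (Suc p)"] by (simp del: nat_pow_Suc)
        have e2: "x \<otimes> inv (x [^] (Suc q)) = inv (x [^] q)"
          using x xq by (simp add: inv_mult_group m_assoc[symmetric])
        have h1: "norm (f (x [^] n) + f (inv (x [^] q)) - 2 *\<^sub>R f x) \<le> c"
          using H[of x "x [^] (Suc q)"] x e1 e2 by simp
        have h2: "norm (f (x [^] q) + f (inv (x [^] q))) \<le> c + 2 * norm (f \<one>)" using E2 xq .
        have h3: "norm (f (x [^] q) - real q *\<^sub>R f x) \<le> cconst c (norm (f \<one>)) q"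
          using less.IH[of q] n q_def by simp
        have rn: "real n *\<^sub>R f x = real q *\<^sub>R f x + 2 *\<^sub>R f x"
          using n q_def by (simp add: scaleR_add_left[symmetric])
        have eq: "f (x [^] n) - real n *\<^sub>R f x = (f (x [^] n) + f (inv (x [^] q)) - 2 *\<^sub>R f x)
            - (f (x [^] q) + f (inv (x [^] q))) + (f (x [^] q) - real q *\<^sub>R f x)"
          unfolding rn by (simp add: algebra_simps)
        have "norm (f (x [^] n) - real n *\<^sub>R f x) \<le> c + (c + 2 * norm (f \<one>)) + cconst c (norm (f \<one>)) q"
          unfolding eq using h1 h2 h3
          by (smt (verit) norm_triangle_ineq norm_triangle_ineq4)
        moreover have "cconst c (norm (f \<one>)) n = c + (c + 2 * norm (f \<one>)) + cconst c (norm (f \<one>)) q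
            \<or> (q = 1 \<and> cconst c (norm (f \<one>)) n = c + (c + 2 * norm (f \<one>)))"
          using n q_def by (cases p) auto
        moreover have "q = 1 \<Longrightarrow> norm (f (x [^] q) - real q *\<^sub>R f x) = 0" using x by simp
        ultimately show ?thesis using h1 h2 eq
          by (smt (verit) norm_triangle_ineq norm_triangle_ineq4)
      qed
    qed
  qed
qed


lemma geo_le: "(m::nat) > 1 \<Longrightarrow> (\<Sum>i<k. real m ^ i) \<le> real m ^ k"
proof (induction k)
  case 0 then show ?case by simp
next
  case (Suc k)
  have "(\<Sum>i<Suc k. real m ^ i) = (\<Sum>i<k. real m ^ i) + real m ^ k" by simp
  also have "\<dots> \<le> 2 * real m ^ k" using Suc by simp
  also have "\<dots> \<le> real m * real m ^ k" using Suc.prems by (intro mult_right_mono) auto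
  finally show ?case by simp
qed

theorem lemma2p4:
  fixes G (structure) and f :: "'g \<Rightarrow> 'e::banach" and c :: real
  assumes "group G"
    and "c > 0"
    and "\<And>x y. x \<in> carrier G \<Longrightarrow> y \<in> carrier G \<Longrightarrow>
           norm (f (x \<otimes> y) + f (x \<otimes> inv y) - 2 *\<^sub>R f x) \<le> c"
    and "m > (1::nat)"
    and "x \<in> carrier G"
  shows "norm (f (x [^] (m ^ k)) - real (m ^ k) *\<^sub>R f x)
           \<le> cconst c (norm (f \<one>)) m * (\<Sum>i<k. real m ^ i)
       \<and> norm ((1 / real (m ^ k)) *\<^sub>R f (x [^] (m ^ k)) - f x)
           \<le> cconst c (norm (f \<one>)) m"
proof -
  interpret group G by (rule assms(1))
  define C where "C = cconst c (norm (f \<one>)) m"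
  have B: "norm (f (y [^] m) - real m *\<^sub>R f y) \<le> C" if "y \<in> carrier G" for y
    unfolding C_def using base_step[OF assms(1) assms(3) assms(2) that, of m] assms(4) by simp
  have C0: "C \<ge> 0" using B[OF assms(5)] norm_ge_zero order_trans by blast
  have P1: "norm (f (x [^] (m ^ k)) - real (m ^ k) *\<^sub>R f x) \<le> C * (\<Sum>i<k. real m ^ i)" for k
  proof (induction k)
    case 0 then show ?case using assms(5) by simp
  next
    case (Suc k)
    define y where "y = x [^] (m ^ k)"
    have y: "y \<in> carrier G" using assms(5) y_def by simp
    have e: "x [^] (m ^ Suc k) = y [^] m" using assms(5) y_def by (simp add: nat_pow_pow mult.commute)
    have eq: "f (x [^] (m ^ Suc k)) - real (m ^ Suc k) *\<^sub>R f x
       = (f (y [^] m) - real m *\<^sub>R f y) + real m *\<^sub>R (f y - real (m ^ k) *\<^sub>R f x)"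
      unfolding e by (simp add: algebra_simps)
    have "norm (f (x [^] (m ^ Suc k)) - real (m ^ Suc k) *\<^sub>R f x)
        \<le> norm (f (y [^] m) - real m *\<^sub>R f y) + real m * norm (f y - real (m ^ k) *\<^sub>R f x)"
      unfolding eq by (metis abs_of_nat norm_scaleR norm_triangle_ineq real_norm_def)
    also have "\<dots> \<le> C + real m * (C * (\<Sum>i<k. real m ^ i))"
      using B[OF y] Suc.IH y_def by (intro add_mono mult_left_mono) auto
    also have "\<dots> = C * (\<Sum>i<Suc k. real m ^ i)"
    proof -
      have "(\<Sum>i<Suc k. real m ^ i) = 1 + real m * (\<Sum>i<k. real m ^ i)"
        by (simp only: sum.lessThan_Suc_shift sum_distrib_left power_Suc power_0)
      then show ?thesis by (simp add: algebra_simps)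
    qed
    finally show ?case .
  qed
  have P2: "norm ((1 / real (m ^ k)) *\<^sub>R f (x [^] (m ^ k)) - f x) \<le> C"
  proof -
    have M: "real (m ^ k) > 0" using assms(4) by simp
    have "(1 / real (m ^ k)) *\<^sub>R f (x [^] (m ^ k)) - f x
        = (1 / real (m ^ k)) *\<^sub>R (f (x [^] (m ^ k)) - real (m ^ k) *\<^sub>R f x)"
      using M assms(4) by (simp add: algebra_simps)
    hence "norm ((1 / real (m ^ k)) *\<^sub>R f (x [^] (m ^ k)) - f x)
        = norm (f (x [^] (m ^ k)) - real (m ^ k) *\<^sub>R f x) / real (m ^ k)" using M by simp
    also have "\<dots> \<le> C * (\<Sum>i<k. real m ^ i) / real (m ^ k)"
      using P1 M by (intro divide_right_mono) auto
    also have "\<dots> \<le> C * real (m ^ k) / real (m ^ k)"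
      using geo_le[OF assms(4), of k] C0 M by (intro divide_right_mono mult_left_mono) auto
    also have "\<dots> = C" using M by simp
    finally show ?thesis .
  qed
  show ?thesis using P1 P2 unfolding C_def by blast
qed

end
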